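(* Each of the following random matrices $\Pi\in\mathbb{R}^{m\times n}$ satisfies the RP conditions: (a) Gaussian projection (GP), with i.i.d. entries $\Pi_{ki}\sim N(0,m^{-1})$; (b) countsketch (CS); (c) the subsampled randomized Hadamard transform (SRHT) $\Pi=\sqrt{n/m}\,SHD$.
   Context: RP conditions on $\Pi=(\Pi_{ki})$: (i) $\mathbb{E}[\Pi_{ki}]=0$, $\mathbb{E}[\Pi_{ki}^2]=m^{-1}$ for all $k\in[m]$, $i\in[n]$, and $\max_{k,i}\mathbb{E}[\Pi_{ki}^4]=O(m^{-1})$; (ii) $\mathbb{E}[\Pi_{ki}\Pi_{kj}]=0$ and $\mathbb{E}[\Pi_{ki}^2\Pi_{kj}^2]=m^{-2}$ for all $k$ and $i\neq j$; (iii) $\mathbb{E}[\Pi_{ki}\Pi_{kj}\Pi_{\ell p}\Pi_{\ell q}]=0$ for all $k\neq\ell$, $i\neq j$, $p\neq q$. Countsketch: $\Pi$ has i.i.d. columns, each with exactly one nonzero entry, located in a uniformly random row and equal to $\pm1$ with equal probability. SRHT: $S\in\mathbb{R}^{m\times n}$ is a uniform sampling-with-replacement matrix (its rows are i.i.d., each equal to $\iota_k^T$ for $k$ uniform on $[n]$, $\iota_k$ the $k$-th standard basis vector), $H\in\mathbb{R}^{n\times n}$ is the normalized Walsh–Hadamard matrix (orthogonal, entries $\pm n^{-1/2}$), and $D\in\mathbb{R}^{n\times n}$ is diagonal with i.i.d. Rademacher ($\pm1$ equiprobable) entries, $S$ and $D$ independent. *)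

theory Defs
  imports "HOL-Probability.Probability"
begin

text \<open>Random matrices are represented as functions from a sample space to
  entries: Pi w k i is the (k,i) entry, with 0-based indices k < m, i < n.\<close>

definition RP_conditions ::
  "'w measure \<Rightarrow> nat \<Rightarrow> nat \<Rightarrow> ('w \<Rightarrow> nat \<Rightarrow> nat \<Rightarrow> real) \<Rightarrow> real \<Rightarrow> bool" where
  "RP_conditions M m n P C \<longleftrightarrow>
     (\<forall>k<m. \<forall>i<n.
        integrable M (\<lambda>w. (P w k i) ^ 4) \<and>
        (\<integral>w. P w k i \<partial>M) = 0 \<and>
        (\<integral>w. (P w k i)^2 \<partial>M) = 1 / real m \<and>
        (\<integral>w. (P w k i)^4 \<partial>M) \<le> C / real m) \<and>
     (\<forall>k<m. \<forall>i<n. \<forall>j<n. i \<noteq> j \<longrightarrow>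
        (\<integral>w. P w k i * P w k j \<partial>M) = 0 \<and>
        (\<integral>w. (P w k i)^2 * (P w k j)^2 \<partial>M) = 1 / (real m)^2) \<and>
     (\<forall>k<m. \<forall>l<m. \<forall>i<n. \<forall>j<n. \<forall>p<n. \<forall>q<n.
        k \<noteq> l \<longrightarrow> i \<noteq> j \<longrightarrow> p \<noteq> q \<longrightarrow>
        (\<integral>w. P w k i * P w k j * P w l p * P w l q \<partial>M) = 0)"

definition GP_space :: "nat \<Rightarrow> nat \<Rightarrow> (nat \<times> nat \<Rightarrow> real) measure" where
  "GP_space m n = (\<Pi>\<^sub>M ki\<in>{..<m} \<times> {..<n}. density lborel (normal_density 0 (sqrt (1 / real m))))"

definition GP_matrix :: "(nat \<times> nat \<Rightarrow> real) \<Rightarrow> nat \<Rightarrow> nat \<Rightarrow> real" where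
  "GP_matrix w k i = w (k, i)"

text \<open>Countsketch: for each column i, independently, a uniform pair (row, sign).\<close>
definition CS_space :: "nat \<Rightarrow> nat \<Rightarrow> (nat \<Rightarrow> nat \<times> real) pmf" where
  "CS_space m n = Pi_pmf {..<n} undefined (\<lambda>_. pmf_of_set ({..<m} \<times> {-1, 1}))"

definition CS_matrix :: "(nat \<Rightarrow> nat \<times> real) \<Rightarrow> nat \<Rightarrow> nat \<Rightarrow> real" where
  "CS_matrix w k i = (if fst (w i) = k then snd (w i) else 0)"

text \<open>Unnormalized Sylvester--Walsh--Hadamard sign matrix of size 2^p (entries +-1).\<close>
fun walsh_sign :: "nat \<Rightarrow> nat \<Rightarrow> nat \<Rightarrow> real" where
  "walsh_sign 0 i j = 1"
| "walsh_sign (Suc p) i j =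
     (if 2^p \<le> i \<and> 2^p \<le> j then -1 else 1) * walsh_sign p (i mod 2^p) (j mod 2^p)"

definition hadamard :: "nat \<Rightarrow> nat \<Rightarrow> nat \<Rightarrow> real" where
  "hadamard p i j = walsh_sign p i j / sqrt (2^p)"

text \<open>SRHT with n = 2^p: S given by i.i.d. uniform row indices s k in {..<n} (k < m),
  D given by i.i.d. Rademacher signs d i (i < n), S and D independent.\<close>
definition SRHT_space :: "nat \<Rightarrow> nat \<Rightarrow> ((nat \<Rightarrow> nat) \<times> (nat \<Rightarrow> real)) pmf" where
  "SRHT_space m p = pair_pmf
     (Pi_pmf {..<m} 0 (\<lambda>_. pmf_of_set {..<(2::nat)^p}))
     (Pi_pmf {..<(2::nat)^p} 1 (\<lambda>_. pmf_of_set {-1, 1}))"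

text \<open>Pi = sqrt(n/m) S H D, so Pi_{ki} = sqrt(n/m) * H_{s_k, i} * d_i.\<close>
definition SRHT_matrix :: "nat \<Rightarrow> nat \<Rightarrow> (nat \<Rightarrow> nat) \<times> (nat \<Rightarrow> real) \<Rightarrow> nat \<Rightarrow> nat \<Rightarrow> real" where
  "SRHT_matrix m p w k i =
     sqrt (real (2^p) / real m) * hadamard p (fst w k) i * snd w i"

end

theory Submission
  imports Defs
begin


lemma finite_set_Pi_pmf:
  assumes "finite A" "\<And>x. x \<in> A \<Longrightarrow> finite (set_pmf (p x))"
  shows "finite (set_pmf (Pi_pmf A d p))"
  using assms by (subst set_Pi_pmf) (auto intro!: finite_PiE_dflt)

lemma Pi_pmf_prod_expect:
  fixes g :: "'a \<Rightarrow> 'b \<Rightarrow> real"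
  assumes A: "finite A" and S: "S \<subseteq> A" and fin: "\<And>x. x \<in> A \<Longrightarrow> finite (set_pmf (p x))"
  shows "measure_pmf.expectation (Pi_pmf A d p) (\<lambda>y. \<Prod>x\<in>S. g x (y x))
       = (\<Prod>x\<in>S. measure_pmf.expectation (p x) (g x))"
proof -
  have finS: "finite S" using A S finite_subset by blast
  have ind: "prob_space.indep_vars (measure_pmf (Pi_pmf A d p)) (\<lambda>_. borel) (\<lambda>x y. g x (y x)) S"
    by (intro prob_space.indep_vars_compose2[OF _ prob_space.indep_vars_subset[OF _ indep_vars_Pi_pmf[OF A] S]])
       (auto simp: measure_pmf.prob_space_axioms)
  have fs: "finite (set_pmf (Pi_pmf A d p))" using finite_set_Pi_pmf[OF A fin] .
  have "measure_pmf.expectation (Pi_pmf A d p) (\<lambda>y. \<Prod>x\<in>S. g x (y x))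
      = (\<Prod>x\<in>S. measure_pmf.expectation (Pi_pmf A d p) (\<lambda>y. g x (y x)))"
    by (rule prob_space.indep_vars_lebesgue_integral[OF measure_pmf.prob_space_axioms finS ind])
       (rule integrable_measure_pmf_finite[OF fs])
  also have "\<dots> = (\<Prod>x\<in>S. measure_pmf.expectation (p x) (g x))"
  proof (intro prod.cong refl)
    fix x assume "x \<in> S"
    hence "x \<in> A" using S by auto
    have "measure_pmf.expectation (p x) (g x) = measure_pmf.expectation (map_pmf (\<lambda>f. f x) (Pi_pmf A d p)) (g x)"
      using Pi_pmf_component[OF A, of x d p] \<open>x \<in> A\<close> by simp
    thus "measure_pmf.expectation (Pi_pmf A d p) (\<lambda>y. g x (y x)) = measure_pmf.expectation (p x) (g x)"
      by simp
  qed
  finally show ?thesis .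
qed

lemma PiM_prod_integral:
  fixes f :: "'i \<Rightarrow> real \<Rightarrow> real"
  assumes I: "finite I" and S: "S \<subseteq> I" and ps: "prob_space N"
    and int: "\<And>i. i \<in> S \<Longrightarrow> integrable N (f i)"
  shows "(\<integral>x. (\<Prod>i\<in>S. f i (x i)) \<partial>(\<Pi>\<^sub>M i\<in>I. N)) = (\<Prod>i\<in>S. integral\<^sup>L N (f i))"
    and "integrable (\<Pi>\<^sub>M i\<in>I. N) (\<lambda>x. \<Prod>i\<in>S. f i (x i))"
proof -
  interpret N: prob_space N by fact
  interpret P: product_sigma_finite "\<lambda>_. N" by standard
  define g where "g i = (if i \<in> S then f i else (\<lambda>_. 1))" for i
  have eq: "(\<lambda>x. \<Prod>i\<in>S. f i (x i)) = (\<lambda>x. \<Prod>i\<in>I. g i (x i))"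
    using S I by (intro ext prod.mono_neutral_cong_left) (auto simp: g_def)
  have ig: "\<And>i. i \<in> I \<Longrightarrow> integrable N (g i)" using int by (auto simp: g_def)
  show "(\<integral>x. (\<Prod>i\<in>S. f i (x i)) \<partial>(\<Pi>\<^sub>M i\<in>I. N)) = (\<Prod>i\<in>S. integral\<^sup>L N (f i))"
    unfolding eq
  proof -
    have "(\<integral>x. (\<Prod>i\<in>I. g i (x i)) \<partial>(\<Pi>\<^sub>M i\<in>I. N)) = (\<Prod>i\<in>I. integral\<^sup>L N (g i))"
      by (rule P.product_integral_prod[OF I ig])
    also have "\<dots> = (\<Prod>i\<in>S. integral\<^sup>L N (f i))"
      using S I by (intro prod.mono_neutral_cong_right) (auto simp: g_def N.prob_space)
    finally show "(\<integral>x. (\<Prod>i\<in>I. g i (x i)) \<partial>(\<Pi>\<^sub>M i\<in>I. N)) = (\<Prod>i\<in>S. integral\<^sup>L N (f i))" .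
  qed
  show "integrable (\<Pi>\<^sub>M i\<in>I. N) (\<lambda>x. \<Prod>i\<in>S. f i (x i))"
    unfolding eq by (rule P.product_integrable_prod[OF I ig])
qed



context
  fixes \<sigma> :: real assumes sp: "0 < \<sigma>"
begin

lemma N_int_pow: "integrable (density lborel (normal_density 0 \<sigma>)) (\<lambda>x. x ^ k)"
  using integrable_normal_moment[OF sp, of 0 k]
  by (subst integrable_density) auto

lemma N_integral_pow: "integral\<^sup>L (density lborel (normal_density 0 \<sigma>)) (\<lambda>x. x ^ k)
   = (\<integral>x. normal_density 0 \<sigma> x * (x - 0) ^ k \<partial>lborel)"
  by (subst integral_density) auto

lemma N_mom1: "integral\<^sup>L (density lborel (normal_density 0 \<sigma>)) (\<lambda>x. x) = 0"
  using N_integral_pow[of 1] integral_normal_moment_odd[OF sp, of 0 0] by simp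

lemma N_mom2: "integral\<^sup>L (density lborel (normal_density 0 \<sigma>)) (\<lambda>x. x^2) = \<sigma>^2"
  using N_integral_pow[of 2] integral_normal_moment_even[OF sp, of 0 1] by simp

lemma N_mom4: "integral\<^sup>L (density lborel (normal_density 0 \<sigma>)) (\<lambda>x. x^4) = 3 * \<sigma>^4"
  using N_integral_pow[of 4] integral_normal_moment_even[OF sp, of 0 2]
  by (simp add: fact_numeral power2_eq_square field_simps eval_nat_numeral)

end

lemma GP_part: "\<exists>C. \<forall>m n. 0 < m \<longrightarrow> 0 < n \<longrightarrow> RP_conditions (GP_space m n) m n GP_matrix C"
proof (intro exI[of _ 3] allI impI)
  fix m n :: nat assume m: "0 < m" and n: "0 < n"
  define \<sigma> where "\<sigma> = sqrt (1 / real m)"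
  have sp: "0 < \<sigma>" using m by (simp add: \<sigma>_def)
  have s2: "\<sigma>^2 = 1 / real m" using m by (simp add: \<sigma>_def)
  have s4: "\<sigma>^4 = 1 / (real m)^2" using s2 by (metis power2_eq_square power_mult_distrib numeral_Bit0 power_add power2_eq_square mult_2 power_divide power_one)
  define N where "N = density lborel (normal_density 0 \<sigma>)"
  define I where "I = {..<m} \<times> {..<n}"
  have GP: "GP_space m n = (\<Pi>\<^sub>M i\<in>I. N)" by (simp add: GP_space_def N_def I_def \<sigma>_def)
  have fI: "finite I" by (simp add: I_def)
  have ps: "prob_space N" unfolding N_def by (rule prob_space_normal_density[OF sp])
  have ip: "\<And>k. integrable N (\<lambda>x. x ^ k)" unfolding N_def by (rule N_int_pow[OF sp])
  have ip1: "integrable N (\<lambda>x. x)" using ip[of 1] by simp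
  have m1: "integral\<^sup>L N (\<lambda>x. x) = 0" unfolding N_def by (rule N_mom1[OF sp])
  have m2: "integral\<^sup>L N (\<lambda>x. x^2) = 1 / real m" unfolding N_def using N_mom2[OF sp] s2 by simp
  have m4: "integral\<^sup>L N (\<lambda>x. x^4) = 3 / (real m)^2" unfolding N_def using N_mom4[OF sp] s4 by simp
  note PI = PiM_prod_integral[OF fI _ ps]
  show "RP_conditions (GP_space m n) m n GP_matrix 3"
    unfolding RP_conditions_def GP GP_matrix_def
  proof (intro conjI allI impI)
    fix k i assume k: "k < m" and i: "i < n"
    have sub: "{(k,i)} \<subseteq> I" using k i by (simp add: I_def)
    have e: "\<And>f. (\<lambda>w::nat\<times>nat\<Rightarrow>real. f (w (k,i))) = (\<lambda>w. \<Prod>z\<in>{(k,i)}. f (w z))" by simp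
    show "integrable (\<Pi>\<^sub>M i\<in>I. N) (\<lambda>w. w (k, i) ^ 4)"
      using PI(2)[OF sub, of "\<lambda>_ x. x^4"] ip by simp
    show "(\<integral>w. w (k, i) \<partial>(\<Pi>\<^sub>M i\<in>I. N)) = 0"
      using PI(1)[OF sub, of "\<lambda>_ x. x"] ip1 m1 by simp
    show "(\<integral>w. (w (k, i))^2 \<partial>(\<Pi>\<^sub>M i\<in>I. N)) = 1 / real m"
      using PI(1)[OF sub, of "\<lambda>_ x. x^2"] ip m2 by simp
    have "(\<integral>w. (w (k, i))^4 \<partial>(\<Pi>\<^sub>M i\<in>I. N)) = 3 / (real m)^2"
      using PI(1)[OF sub, of "\<lambda>_ x. x^4"] ip m4 by simp
    also have "\<dots> \<le> 3 / real m" using m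
      by (intro divide_left_mono) (auto simp: power2_eq_square)
    finally show "(\<integral>w. (w (k, i))^4 \<partial>(\<Pi>\<^sub>M i\<in>I. N)) \<le> 3 / real m" .
  next
    fix k i j assume k: "k < m" and i: "i < n" and j: "j < n" and ij: "i \<noteq> j"
    have sub: "{(k,i),(k,j)} \<subseteq> I" using k i j by (simp add: I_def)
    show "(\<integral>w. w (k, i) * w (k, j) \<partial>(\<Pi>\<^sub>M i\<in>I. N)) = 0"
      using PI(1)[OF sub, of "\<lambda>_ x. x"] ip1 m1 ij by simp
    show "(\<integral>w. (w (k, i))^2 * (w (k, j))^2 \<partial>(\<Pi>\<^sub>M i\<in>I. N)) = 1 / (real m)^2"
    proof -
      have "(\<integral>w. (w (k, i))^2 * (w (k, j))^2 \<partial>(\<Pi>\<^sub>M i\<in>I. N)) = 1 / real m * (1 / real m)"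
        using PI(1)[OF sub, of "\<lambda>_ x. x^2"] ip m2 ij by simp
      thus ?thesis by (simp add: power2_eq_square)
    qed
  next
    fix k l i j p q assume k: "k < m" and l: "l < m" and i: "i < n" and j: "j < n"
      and p: "p < n" and q: "q < n" and kl: "k \<noteq> l" and ij: "i \<noteq> j" and pq: "p \<noteq> q"
    have sub: "{(k,i),(k,j),(l,p),(l,q)} \<subseteq> I" using k l i j p q by (simp add: I_def)
    show "(\<integral>w. w (k, i) * w (k, j) * w (l, p) * w (l, q) \<partial>(\<Pi>\<^sub>M i\<in>I. N)) = 0"
      using PI(1)[OF sub, of "\<lambda>_ x. x"] ip1 m1 ij pq kl by (simp add: mult.assoc)
  qed
qed



lemma CSQ:
  fixes h :: "real \<Rightarrow> real"
  assumes k: "k < m"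
  shows "measure_pmf.expectation (pmf_of_set ({..<m} \<times> {-1, 1::real})) (\<lambda>v. if fst v = k then h (snd v) else 0)
       = (h (-1) + h 1) / (2 * real m)"
proof -
  have ne: "{..<m} \<times> {-1, 1::real} \<noteq> {}" using k by auto
  have c: "card ({..<m} \<times> {-1, 1::real}) = 2 * m" by (simp add: card_cartesian_product)
  have "sum (\<lambda>v. if fst v = k then h (snd v) else 0) ({..<m} \<times> {-1, 1::real})
      = (\<Sum>a<m. \<Sum>b\<in>{-1,1::real}. if a = k then h b else 0)"
    by (subst sum.cartesian_product) (simp add: split_beta)
  also have "\<dots> = (\<Sum>a<m. if a = k then h (-1) + h 1 else 0)"
    by (intro sum.cong) auto
  also have "\<dots> = h (-1) + h 1" using k by (simp add: sum.delta)
  finally show ?thesis using ne c by (simp add: integral_pmf_of_set)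
qed

lemma CS_part: "\<exists>C. \<forall>m n. 0 < m \<longrightarrow> 0 < n \<longrightarrow>
            RP_conditions (measure_pmf (CS_space m n)) m n CS_matrix C"
proof (intro exI[of _ 1] allI impI)
  fix m n :: nat assume m: "0 < m" and n: "0 < n"
  define Q where "Q = pmf_of_set ({..<m} \<times> {-1, 1::real})"
  define A where "A = {..<n}"
  have CS: "CS_space m n = Pi_pmf A undefined (\<lambda>_. Q)" by (simp add: CS_space_def Q_def A_def)
  have fA: "finite A" by (simp add: A_def)
  have fQ: "finite (set_pmf Q)" using m unfolding Q_def by (subst set_pmf_of_set) auto
  have fP: "finite (set_pmf (Pi_pmf A undefined (\<lambda>_. Q)))" by (rule finite_set_Pi_pmf[OF fA fQ])
  note PE = Pi_pmf_prod_expect[OF fA _ fQ, of _ undefined]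
  have Q1: "\<And>k h. k < m \<Longrightarrow> measure_pmf.expectation Q (\<lambda>v. if fst v = k then h (snd v) else 0) = (h (-1) + h 1) / (2 * real m)"
    unfolding Q_def by (rule CSQ)
  have Q1': "\<And>k. k < m \<Longrightarrow> measure_pmf.expectation Q (\<lambda>v. if fst v = k then snd v else 0) = 0"
    using Q1[of _ "\<lambda>b. b"] by simp
  have Q2: "\<And>k. k < m \<Longrightarrow> measure_pmf.expectation Q (\<lambda>v. if fst v = k then (snd v)^2 else 0) = 1 / real m"
    using Q1[of _ "\<lambda>b. b^2"] by simp
  have Q4: "\<And>k. k < m \<Longrightarrow> measure_pmf.expectation Q (\<lambda>v. if fst v = k then (snd v)^4 else 0) = 1 / real m"
    using Q1[of _ "\<lambda>b. b^4"] by simp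
  show "RP_conditions (measure_pmf (CS_space m n)) m n CS_matrix 1"
    unfolding RP_conditions_def CS CS_matrix_def
  proof (intro conjI allI impI)
    fix k i assume k: "k < m" and i: "i < n"
    have sub: "{i} \<subseteq> A" using i by (simp add: A_def)
    show "integrable (measure_pmf (Pi_pmf A undefined (\<lambda>_. Q))) (\<lambda>w. (if fst (w i) = k then snd (w i) else 0) ^ 4)"
      by (rule integrable_measure_pmf_finite[OF fP])
    show "measure_pmf.expectation (Pi_pmf A undefined (\<lambda>_. Q)) (\<lambda>w. if fst (w i) = k then snd (w i) else 0) = 0"
      using PE[OF sub, of "\<lambda>_ v. if fst v = k then snd v else 0"] Q1'[OF k] by simp
    have e2: "\<And>w::nat\<Rightarrow>nat\<times>real. (if fst (w i) = k then snd (w i) else 0)^2 = (\<Prod>x\<in>{i}. (\<lambda>_ v. if fst v = k then (snd v)^2 else 0) x (w x))" by simp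
    show "measure_pmf.expectation (Pi_pmf A undefined (\<lambda>_. Q)) (\<lambda>w. (if fst (w i) = k then snd (w i) else 0)^2) = 1 / real m"
      unfolding e2 using PE[OF sub, of "\<lambda>_ v. if fst v = k then (snd v)^2 else 0"] Q2[OF k] by simp
    have e4: "\<And>w::nat\<Rightarrow>nat\<times>real. (if fst (w i) = k then snd (w i) else 0)^4 = (\<Prod>x\<in>{i}. (\<lambda>_ v. if fst v = k then (snd v)^4 else 0) x (w x))" by simp
    show "measure_pmf.expectation (Pi_pmf A undefined (\<lambda>_. Q)) (\<lambda>w. (if fst (w i) = k then snd (w i) else 0)^4) \<le> 1 / real m"
      unfolding e4 using PE[OF sub, of "\<lambda>_ v. if fst v = k then (snd v)^4 else 0"] Q4[OF k] by simp
  next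
    fix k i j assume k: "k < m" and i: "i < n" and j: "j < n" and ij: "i \<noteq> j"
    have sub: "{i,j} \<subseteq> A" using i j by (simp add: A_def)
    have e1: "\<And>w. (if fst (w i) = k then snd (w i) else 0) * (if fst (w j) = k then snd (w j) else 0)
       = (\<Prod>x\<in>{i,j}. (\<lambda>_ v. if fst v = k then snd v else 0) x (w x))" using ij by simp
    show "measure_pmf.expectation (Pi_pmf A undefined (\<lambda>_. Q)) (\<lambda>w. (if fst (w i) = k then snd (w i) else 0) * (if fst (w j) = k then snd (w j) else 0)) = 0"
      unfolding e1 using PE[OF sub, of "\<lambda>_ v. if fst v = k then snd v else 0"] Q1'[OF k] ij by simp
    have e2: "\<And>w::nat\<Rightarrow>nat\<times>real. (if fst (w i) = k then snd (w i) else 0)^2 * (if fst (w j) = k then snd (w j) else 0)^2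
       = (\<Prod>x\<in>{i,j}. (\<lambda>_ v. if fst v = k then (snd v)^2 else 0) x (w x))" using ij by simp
    show "measure_pmf.expectation (Pi_pmf A undefined (\<lambda>_. Q)) (\<lambda>w. (if fst (w i) = k then snd (w i) else 0)^2 * (if fst (w j) = k then snd (w j) else 0)^2) = 1 / (real m)^2"
      unfolding e2 using PE[OF sub, of "\<lambda>_ v. if fst v = k then (snd v)^2 else 0"] Q2[OF k] ij by (simp add: power2_eq_square)
  next
    fix k l i j p q assume k: "k < m" and l: "l < m" and i: "i < n" and j: "j < n"
      and p: "p < n" and q: "q < n" and kl: "k \<noteq> l" and ij: "i \<noteq> j" and pq: "p \<noteq> q"
    let ?e = "\<lambda>k v. if fst v = k then snd v else (0::real)"
    show "measure_pmf.expectation (Pi_pmf A undefined (\<lambda>_. Q))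
      (\<lambda>w. (if fst (w i) = k then snd (w i) else 0) * (if fst (w j) = k then snd (w j) else 0) *
           (if fst (w p) = l then snd (w p) else 0) * (if fst (w q) = l then snd (w q) else 0)) = 0"
    proof (cases "i = p \<or> i = q \<or> j = p \<or> j = q")
      case True
      hence "\<And>w. (if fst (w i) = k then snd (w i) else 0) * (if fst (w j) = k then snd (w j) else 0) *
           (if fst (w p) = l then snd (w p) else 0) * (if fst (w q) = l then snd (w q) else (0::real)) = 0"
        using kl by auto
      thus ?thesis by (simp only: integral_zero)
    next
      case False
      have sub: "{i,j,p,q} \<subseteq> A" using i j p q by (simp add: A_def)
      define g where "g x = (if x = i \<or> x = j then ?e k else ?e l)" for x
      have e: "\<And>w. (if fst (w i) = k then snd (w i) else 0) * (if fst (w j) = k then snd (w j) else 0) *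
           (if fst (w p) = l then snd (w p) else 0) * (if fst (w q) = l then snd (w q) else (0::real))
         = (\<Prod>x\<in>{i,j,p,q}. g x (w x))" using False ij pq by (simp add: g_def mult.assoc)
      show ?thesis unfolding e using PE[OF sub, of g] False ij Q1'[OF k] by (simp add: g_def)
    qed
  qed
qed



lemma walsh_sq: "(walsh_sign p i j)^2 = 1"
  by (induction p arbitrary: i j) (auto simp: power_mult_distrib)

lemma sum_split_plus: "(\<Sum>s<a+b. f s) = (\<Sum>s<a. f s) + (\<Sum>s<b. f (a+s))" for f :: "nat \<Rightarrow> real"
  by (induction b) (auto simp: add.assoc)

lemma walsh_orth:
  "i < 2^p \<Longrightarrow> j < 2^p \<Longrightarrow>
   (\<Sum>s<2^p. walsh_sign p s i * walsh_sign p s j) = (if i = j then 2^p else 0)"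
proof (induction p arbitrary: i j)
  case 0 thus ?case by simp
next
  case (Suc p)
  define N :: nat where "N = 2^p"
  have N: "(2::nat)^Suc p = N + N" by (simp add: N_def)
  define e where "e i = (if N \<le> i then -1 else (1::real))" for i
  have lo: "\<And>s i. s < N \<Longrightarrow> walsh_sign (Suc p) s i = walsh_sign p s (i mod N)"
    by (simp add: N_def)
  have hi: "\<And>s i. s < N \<Longrightarrow> walsh_sign (Suc p) (N + s) i = e i * walsh_sign p s (i mod N)"
    by (simp add: N_def e_def)
  have IH: "(\<Sum>s<N. walsh_sign p s (i mod N) * walsh_sign p s (j mod N)) = (if i mod N = j mod N then real N else 0)"
    using Suc.IH[of "i mod N" "j mod N"] by (simp add: N_def)
  have "(\<Sum>s<2^Suc p. walsh_sign (Suc p) s i * walsh_sign (Suc p) s j)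
     = (\<Sum>s<N. walsh_sign (Suc p) s i * walsh_sign (Suc p) s j)
       + (\<Sum>s<N. walsh_sign (Suc p) (N+s) i * walsh_sign (Suc p) (N+s) j)"
    unfolding N by (rule sum_split_plus)
  also have "\<dots> = (\<Sum>s<N. walsh_sign p s (i mod N) * walsh_sign p s (j mod N))
       + e i * e j * (\<Sum>s<N. walsh_sign p s (i mod N) * walsh_sign p s (j mod N))"
    by (simp del: walsh_sign.simps add: lo hi sum_distrib_left mult_ac)
  also have "\<dots> = (1 + e i * e j) * (if i mod N = j mod N then real N else 0)"
    unfolding IH by (simp add: algebra_simps)
  also have "\<dots> = (if i = j then 2^Suc p else 0)"
  proof -
    have iN: "i < N + N" "j < N + N" using Suc.prems N by auto
    show ?thesis
    proof (cases "i = j")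
      case True thus ?thesis by (simp add: e_def N_def)
    next
      case False
      show ?thesis
      proof (cases "i mod N = j mod N")
        case True
        have "N \<le> i \<longleftrightarrow> \<not> N \<le> j"
        proof
          assume "N \<le> i"
          hence "i mod N = i - N" using iN by (simp add: le_mod_geq)
          thus "\<not> N \<le> j" using True False iN \<open>N \<le> i\<close> by (auto simp: le_mod_geq)
        next
          assume "\<not> N \<le> j"
          hence "j mod N = j" by simp
          thus "N \<le> i" using True False by (metis mod_less not_le)
        qed
        thus ?thesis using False by (simp add: e_def)
      qed (use False in simp)
    qed
  qed
  finally show ?case .
qed



definition flipc :: "nat \<Rightarrow> (nat \<Rightarrow> real) \<Rightarrow> nat \<Rightarrow> real" where
  "flipc x d = d(x := - d x)"

lemma flipc_invol: "flipc x (flipc x d) = d"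
  by (auto simp: flipc_def)

lemma Rad_flip:
  assumes A: "finite A" and x: "x \<in> A"
  shows "map_pmf (flipc x) (Pi_pmf A 1 (\<lambda>_. pmf_of_set {-1, 1::real})) = Pi_pmf A 1 (\<lambda>_. pmf_of_set {-1, 1::real})"
    (is "map_pmf ?f ?D = ?D")
proof (rule pmf_eqI)
  fix f
  have inj: "inj ?f" by (metis flipc_invol injI)
  have "pmf (map_pmf ?f ?D) f = pmf (map_pmf ?f ?D) (?f (?f f))" by (simp add: flipc_invol)
  also have "\<dots> = pmf ?D (?f f)" by (rule pmf_map_inj'[OF inj])
  also have "\<dots> = pmf ?D f"
    using A x by (simp add: pmf_Pi flipc_def pmf_of_set indicator_def)
      (auto intro!: prod.cong split: if_splits)
  finally show "pmf (map_pmf ?f ?D) f = pmf ?D f" .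
qed

lemma pair_flip:
  fixes F :: "'a \<times> (nat \<Rightarrow> real) \<Rightarrow> real"
  assumes A: "finite A" and x: "x \<in> A"
  shows "measure_pmf.expectation (pair_pmf M (Pi_pmf A 1 (\<lambda>_. pmf_of_set {-1, 1::real}))) F
       = measure_pmf.expectation (pair_pmf M (Pi_pmf A 1 (\<lambda>_. pmf_of_set {-1, 1::real}))) (\<lambda>w. F (fst w, flipc x (snd w)))"
proof -
  let ?D = "Pi_pmf A 1 (\<lambda>_. pmf_of_set {-1, 1::real})"
  have "pair_pmf M ?D = pair_pmf M (map_pmf (flipc x) ?D)" by (simp add: Rad_flip[OF A x])
  also have "\<dots> = map_pmf (apsnd (flipc x)) (pair_pmf M ?D)" by (rule pair_map_pmf2)
  finally have e: "pair_pmf M ?D = map_pmf (apsnd (flipc x)) (pair_pmf M ?D)" .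
  show ?thesis
    by (subst e) (simp add: apsnd_def map_prod_def split_beta)
qed

lemma zero_by_flip:
  fixes F :: "'a \<times> (nat \<Rightarrow> real) \<Rightarrow> real"
  assumes A: "finite A" and x: "x \<in> A" and neg: "\<And>w. F (fst w, flipc x (snd w)) = - F w"
  shows "measure_pmf.expectation (pair_pmf M (Pi_pmf A 1 (\<lambda>_. pmf_of_set {-1, 1::real}))) F = 0"
  using pair_flip[OF A x, of M F] by (simp add: neg)

lemma hadamard_sq: "(hadamard p s i)^2 = 1 / 2^p"
  by (simp add: hadamard_def power_divide walsh_sq)

lemma hadamard_orth:
  assumes "i < 2^p" "j < 2^p" "i \<noteq> j"
  shows "measure_pmf.expectation (pmf_of_set {..<(2::nat)^p}) (\<lambda>s. hadamard p s i * hadamard p s j) = 0"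
proof -
  have "(\<Sum>s<(2::nat)^p. hadamard p s i * hadamard p s j) = (\<Sum>s<2^p. walsh_sign p s i * walsh_sign p s j) / 2^p"
    by (simp add: hadamard_def sum_divide_distrib)
  also have "\<dots> = 0" using walsh_orth[of i p j] assms by simp
  finally show ?thesis by (subst integral_pmf_of_set) (auto simp: lessThan_empty_iff)
qed

lemma SRHT_sq:
  assumes m: "0 < m"
  shows "(SRHT_matrix m p w k i)^2 = (snd w i)^2 / real m"
proof -
  have "(SRHT_matrix m p w k i)^2 = (sqrt (real (2^p) / real m))^2 * (hadamard p (fst w k) i)^2 * (snd w i)^2"
    by (simp add: SRHT_matrix_def power_mult_distrib)
  also have "\<dots> = (real (2^p) / real m) * (1 / 2^p) * (snd w i)^2"
    using m by (simp add: hadamard_sq)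
  also have "\<dots> = (snd w i)^2 / real m" by simp
  finally show ?thesis .
qed



lemma SRHT_part: "\<exists>C. \<forall>m p. 0 < m \<longrightarrow>
            RP_conditions (measure_pmf (SRHT_space m p)) m (2^p) (SRHT_matrix m p) C"
proof (intro exI[of _ 1] allI impI)
  fix m p :: nat assume m: "0 < m"
  define n :: nat where "n = 2^p"
  define Sm where "Sm = Pi_pmf {..<m} 0 (\<lambda>_. pmf_of_set {..<n})"
  define Dm where "Dm = Pi_pmf {..<n} 1 (\<lambda>_. pmf_of_set {-1, 1::real})"
  have SP: "SRHT_space m p = pair_pmf Sm Dm" by (simp add: SRHT_space_def Sm_def Dm_def n_def)
  have n0: "0 < n" by (simp add: n_def)
  have fS: "finite (set_pmf Sm)" unfolding Sm_def
    by (rule finite_set_Pi_pmf) (use n0 in \<open>auto simp: lessThan_empty_iff\<close>)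
  have fD: "finite (set_pmf Dm)" unfolding Dm_def
    by (rule finite_set_Pi_pmf) auto
  have fW: "finite (set_pmf (pair_pmf Sm Dm))" using fS fD by simp
  have supp: "\<And>w z. w \<in> set_pmf (pair_pmf Sm Dm) \<Longrightarrow> (snd w z)^2 = 1"
  proof -
    fix w z assume "w \<in> set_pmf (pair_pmf Sm Dm)"
    hence "snd w \<in> set_pmf Dm" by auto
    hence "snd w z \<in> {-1, 1}" unfolding Dm_def
      by (subst (asm) set_Pi_pmf) (auto simp: PiE_dflt_def)
    thus "(snd w z)^2 = 1" by auto
  qed
  let ?M = "measure_pmf (pair_pmf Sm Dm)"
  let ?P = "SRHT_matrix m p"
  have sq: "\<And>w k i. w \<in> set_pmf (pair_pmf Sm Dm) \<Longrightarrow> (?P w k i)^2 = 1 / real m"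
    using SRHT_sq[OF m] supp by simp
  have Sdef: "\<And>w k i. ?P w k i = sqrt (real n / real m) * hadamard p (fst w k) i * snd w i"
    by (simp add: SRHT_matrix_def n_def)
  have fA: "finite {..<n}" by simp
  note ZF = zero_by_flip[OF fA, of _ _ Sm, folded Dm_def]
  show "RP_conditions (measure_pmf (SRHT_space m p)) m (2^p) (SRHT_matrix m p) 1"
    unfolding RP_conditions_def SP n_def[symmetric]
  proof (intro conjI allI impI)
    fix k i assume k: "k < m" and i: "i < n"
    show "integrable ?M (\<lambda>w. (?P w k i) ^ 4)"
      by (rule integrable_measure_pmf_finite[OF fW])
    show "(\<integral>w. ?P w k i \<partial>?M) = 0"
      by (rule ZF[of i]) (use i in \<open>simp_all add: Sdef flipc_def\<close>)
    show "(\<integral>w. (?P w k i)^2 \<partial>?M) = 1 / real m"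
      by (subst integral_cong_AE[where g = "\<lambda>_. 1 / real m"]) (auto simp: AE_measure_pmf_iff sq)
    have "(\<integral>w. (?P w k i)^4 \<partial>?M) = 1 / real m * (1 / real m)"
    proof (subst integral_cong_AE[where g = "\<lambda>_. 1 / real m * (1 / real m)"])
      show "AE w in ?M. (?P w k i)^4 = 1 / real m * (1 / real m)"
        unfolding AE_measure_pmf_iff
      proof
        fix w assume "w \<in> set_pmf (pair_pmf Sm Dm)"
        hence "(?P w k i)^2 = 1 / real m" by (rule sq)
        hence "((?P w k i)^2)^2 = 1 / real m * (1 / real m)" by (simp add: power2_eq_square)
        thus "(?P w k i)^4 = 1 / real m * (1 / real m)" by (simp add: power_mult[symmetric])
      qed
    qed auto
    also have "\<dots> \<le> 1 / real m" using m by (simp add: divide_le_eq_1 field_simps)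
    finally show "(\<integral>w. (?P w k i)^4 \<partial>?M) \<le> 1 / real m" .
  next
    fix k i j assume k: "k < m" and i: "i < n" and j: "j < n" and ij: "i \<noteq> j"
    show "(\<integral>w. ?P w k i * ?P w k j \<partial>?M) = 0"
      by (rule ZF[of i]) (use i ij in \<open>simp_all add: Sdef flipc_def\<close>)
    show "(\<integral>w. (?P w k i)^2 * (?P w k j)^2 \<partial>?M) = 1 / (real m)^2"
    proof (subst integral_cong_AE[where g = "\<lambda>_. 1 / (real m)^2"])
      show "AE w in ?M. (?P w k i)^2 * (?P w k j)^2 = 1 / (real m)^2"
        unfolding AE_measure_pmf_iff
      proof
        fix w assume w: "w \<in> set_pmf (pair_pmf Sm Dm)"
        show "(?P w k i)^2 * (?P w k j)^2 = 1 / (real m)^2"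
          unfolding sq[OF w] by (simp add: power2_eq_square)
      qed
    qed auto
  next
    fix k l i j a b assume k: "k < m" and l: "l < m" and i: "i < n" and j: "j < n"
      and a: "a < n" and b: "b < n" and kl: "k \<noteq> l" and ij: "i \<noteq> j" and ab: "a \<noteq> b"
    show "(\<integral>w. ?P w k i * ?P w k j * ?P w l a * ?P w l b \<partial>?M) = 0"
    proof (cases "{a, b} = {i, j}")
      case False
      then obtain x where x: "x \<in> {i, j}" "x \<notin> {a, b}" using ab ij by blast
      show ?thesis
      proof (rule ZF[of x])
        show "x \<in> {..<n}" using x i j by auto
        fix w :: "(nat \<Rightarrow> nat) \<times> (nat \<Rightarrow> real)"
        show "?P (fst w, flipc x (snd w)) k i * ?P (fst w, flipc x (snd w)) k j *
              ?P (fst w, flipc x (snd w)) l a * ?P (fst w, flipc x (snd w)) l b =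
              - (?P w k i * ?P w k j * ?P w l a * ?P w l b)"
          using x ij by (auto simp: Sdef flipc_def)
      qed
    next
      case True
      define F where "F s = hadamard p s i * hadamard p s j" for s
      define r where "r = sqrt (real n / real m)"
      define c where "c = r^4"
      have Sdef': "\<And>w k i. ?P w k i = r * hadamard p (fst w k) i * snd w i" unfolding r_def by (rule Sdef)
      have ab': "(a = i \<and> b = j) \<or> (a = j \<and> b = i)" using True ab ij
        by (metis doubleton_eq_iff)
      have "(\<integral>w. ?P w k i * ?P w k j * ?P w l a * ?P w l b \<partial>?M)
          = (\<integral>w. c * (F (fst w k) * F (fst w l)) \<partial>?M)"
      proof (rule integral_cong_AE)
        show "AE w in ?M. ?P w k i * ?P w k j * ?P w l a * ?P w l b = c * (F (fst w k) * F (fst w l))"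
          unfolding AE_measure_pmf_iff
        proof
          fix w assume w: "w \<in> set_pmf (pair_pmf Sm Dm)"
          have di: "(snd w i)^2 = 1" and dj: "(snd w j)^2 = 1" using supp[OF w] by auto
          have "?P w k i * ?P w k j * ?P w l a * ?P w l b
             = c * (F (fst w k) * F (fst w l)) * ((snd w i)^2 * (snd w j)^2)"
            using ab' by (auto simp: Sdef' c_def F_def power2_eq_square eval_nat_numeral mult_ac simp del: hadamard_sq)
          thus "?P w k i * ?P w k j * ?P w l a * ?P w l b = c * (F (fst w k) * F (fst w l))"
            using di dj by simp
        qed
      qed auto
      also have "\<dots> = c * (\<integral>w. F (fst w k) * F (fst w l) \<partial>?M)" by simp
      also have "(\<integral>w. F (fst w k) * F (fst w l) \<partial>?M)
          = (\<integral>s. F (s k) * F (s l) \<partial>measure_pmf (map_pmf fst (pair_pmf Sm Dm)))" by simp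
      also have "\<dots> = (\<integral>s. (\<Prod>y\<in>{k,l}. (\<lambda>_. F) y (s y)) \<partial>measure_pmf Sm)"
        using kl by (simp add: map_fst_pair_pmf)
      also have "\<dots> = (\<Prod>y\<in>{k,l}. measure_pmf.expectation (pmf_of_set {..<n}) F)"
        unfolding Sm_def
        by (rule Pi_pmf_prod_expect) (use k l n0 in \<open>auto simp: lessThan_empty_iff\<close>)
      also have "measure_pmf.expectation (pmf_of_set {..<n}) F = 0"
        unfolding F_def n_def by (rule hadamard_orth) (use i j ij in \<open>auto simp: n_def\<close>)
      finally show ?thesis using kl by simp
    qed
  qed
qed


theorem lemmaA1:
  shows "(\<exists>C. \<forall>m n. 0 < m \<longrightarrow> 0 < n \<longrightarrow>
            RP_conditions (GP_space m n) m n GP_matrix C)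
       \<and> (\<exists>C. \<forall>m n. 0 < m \<longrightarrow> 0 < n \<longrightarrow>
            RP_conditions (measure_pmf (CS_space m n)) m n CS_matrix C)
       \<and> (\<exists>C. \<forall>m p. 0 < m \<longrightarrow>
            RP_conditions (measure_pmf (SRHT_space m p)) m (2^p) (SRHT_matrix m p) C)"
  using GP_part CS_part SRHT_part by blast

end
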